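(* For every $V \in \mathrm{SL}_2(\mathbb C)$ and every $l \in \mathbb N$, we have $$\det \sigma_l\big(\mathrm{Ad}(V)\big) = (l+1)\, S_l^2(v), \qquad \text{where } v = \operatorname{tr} V.$$
   Context: Here $\mathrm{Ad}$ denotes the adjoint action of $\mathrm{SL}_2(\mathbb C)$ on its Lie algebra $\mathfrak{sl}_2(\mathbb C)$ of trace-zero $2\times 2$ complex matrices, $\mathrm{Ad}(V)(g) = V g V^{-1}$; thus $\mathrm{Ad}(V)$ is regarded as a $3\times 3$ matrix in $\mathrm{SL}_3(\mathbb C)$ (explicitly, for $V = \begin{bmatrix} e & f\\ g & h\end{bmatrix}$, $\mathrm{Ad}(V) = \begin{bmatrix} e^2 & -2ef & -f^2\\ -eg & eh+fg & fh\\ -g^2 & 2gh & h^2\end{bmatrix}$). For $l \ge 0$ and a square matrix $U$, $\sigma_l(U) = \sum_{i=0}^{l} U^i$. The $S_l(v)$ are the Chebyshev polynomials of the second kind, defined by $S_0(v)=1$, $S_1(v)=v$, and $S_l(v) = v S_{l-1}(v) - S_{l-2}(v)$ for all integers $l$. *)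

theory Defs
  imports "HOL-Analysis.Analysis"
begin

fun cheb_S :: "nat \<Rightarrow> complex \<Rightarrow> complex" where
  "cheb_S 0 v = 1"
| "cheb_S (Suc 0) v = v"
| "cheb_S (Suc (Suc n)) v = v * cheb_S (Suc n) v - cheb_S n v"

fun mat_pow :: "'a::comm_ring_1^'n^'n \<Rightarrow> nat \<Rightarrow> 'a^'n^'n" where
  "mat_pow U 0 = mat 1"
| "mat_pow U (Suc n) = U ** mat_pow U n"

definition sigma_mat :: "nat \<Rightarrow> 'a::comm_ring_1^'n^'n \<Rightarrow> 'a^'n^'n" where
  "sigma_mat l U = (\<Sum>i\<in>{0..l}. mat_pow U i)"

text \<open>Adjoint action of SL_2(C) on sl_2(C), as the explicit 3x3 matrix.\<close>
definition Ad :: "complex^2^2 \<Rightarrow> complex^3^3" where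
  "Ad V = (let e = V$1$1; f = V$1$2; g = V$2$1; h = V$2$2 in
     vector [vector [e^2, -2*e*f, -(f^2)],
             vector [-(e*g), e*h + f*g, f*h],
             vector [-(g^2), 2*g*h, h^2]])"

end

theory Submission
  imports Defs
begin

lemma Ad_entries:
  "Ad V $1$1 = (V$1$1)^2" "Ad V $1$2 = -2*V$1$1*V$1$2" "Ad V $1$3 = -((V$1$2)^2)"
  "Ad V $2$1 = -(V$1$1*V$2$1)" "Ad V $2$2 = V$1$1*V$2$2 + V$1$2*V$2$1" "Ad V $2$3 = V$1$2*V$2$2"
  "Ad V $3$1 = -((V$2$1)^2)" "Ad V $3$2 = 2*V$2$1*V$2$2" "Ad V $3$3 = (V$2$2)^2"
  by (simp_all add: Ad_def Let_def)

lemma Ad_mult: "Ad (A ** B) = Ad A ** Ad B"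
  unfolding vec_eq_iff forall_3
  by (simp add: Ad_entries matrix_matrix_mult_def sum_3 sum_2 power2_eq_square algebra_simps)

lemma Ad_one: "Ad (mat 1) = mat 1"
  unfolding vec_eq_iff forall_3
  by (simp add: Ad_entries mat_def)

lemma matrix_add_rdistrib':
  fixes A B C :: "'a::comm_ring_1^'n^'n"
  shows "(B + C) ** A = B ** A + C ** A"
  by (vector matrix_matrix_mult_def sum.distrib[symmetric] field_simps)

lemma mat_pow_conj:
  fixes P Q U :: "'a::comm_ring_1^'n^'n"
  assumes "Q ** P = mat 1" "P ** Q = mat 1"
  shows "mat_pow (P ** U ** Q) i = P ** mat_pow U i ** Q"
proof (induction i)
  case 0
  then show ?case using assms by simp
next
  case (Suc i)
  have "P ** U ** Q ** (P ** mat_pow U i ** Q) = P ** U ** (Q ** P) ** mat_pow U i ** Q"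
    by (simp add: matrix_mul_assoc)
  then show ?case using Suc assms by (simp add: matrix_mul_assoc)
qed

lemma sigma_conj:
  fixes P Q U :: "'a::comm_ring_1^'n^'n"
  assumes "Q ** P = mat 1" "P ** Q = mat 1"
  shows "sigma_mat l (P ** U ** Q) = P ** sigma_mat l U ** Q"
proof (induction l)
  case 0
  then show ?case using assms by (simp add: sigma_mat_def)
next
  case (Suc l)
  have e: "sigma_mat (Suc l) X = sigma_mat l X + mat_pow X (Suc l)" for X :: "'a^'n^'n"
    by (simp only: sigma_mat_def sum.atLeast0_atMost_Suc)
  show ?case unfolding e Suc mat_pow_conj[OF assms]
    by (simp only: matrix_add_ldistrib matrix_add_rdistrib')
qed

lemma det_sigma_conj:
  fixes P Q U :: "'a::comm_ring_1^'n^'n"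
  assumes "Q ** P = mat 1" "P ** Q = mat 1"
  shows "det (sigma_mat l (P ** U ** Q)) = det (sigma_mat l U)"
proof -
  have "det P * det Q = 1" using assms(2) det_mul[of P Q] by simp
  then show ?thesis unfolding sigma_conj[OF assms] det_mul by (metis mult.commute mult.left_commute mult.right_neutral)
qed

lemma triang_pow:
  fixes M :: "'a::comm_ring_1^3^3"
  assumes "M$2$1 = 0" "M$3$1 = 0" "M$3$2 = 0"
  shows "mat_pow M i $2$1 = 0 \<and> mat_pow M i $3$1 = 0 \<and> mat_pow M i $3$2 = 0 \<and>
    mat_pow M i $1$1 = (M$1$1)^i \<and> mat_pow M i $2$2 = (M$2$2)^i \<and> mat_pow M i $3$3 = (M$3$3)^i"
proof (induction i)
  case 0
  then show ?case by (simp add: mat_def)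
next
  case (Suc i)
  then show ?case using assms by (simp add: matrix_matrix_mult_def sum_3)
qed

lemma det_sigma_triang:
  fixes M :: "'a::comm_ring_1^3^3"
  assumes "M$2$1 = 0" "M$3$1 = 0" "M$3$2 = 0"
  shows "det (sigma_mat l M) = (\<Sum>i\<in>{0..l}. (M$1$1)^i) * (\<Sum>i\<in>{0..l}. (M$2$2)^i) * (\<Sum>i\<in>{0..l}. (M$3$3)^i)"
  using triang_pow[OF assms] by (simp add: det_3 sigma_mat_def)

lemma cheb_h:
  fixes a d :: complex
  assumes "a * d = 1"
  shows "cheb_S n (a + d) = (\<Sum>i\<in>{0..n}. a^i * d^(n-i))"
proof -
  define h where "h n = (\<Sum>i\<in>{0..n}. a^i * d^(n-i))" for n
  have step: "h (Suc n) = a^(Suc n) + d * h n" for n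
  proof -
    have "h (Suc n) = (\<Sum>i\<in>{0..n}. a^i * d^(Suc n-i)) + a^(Suc n)"
      unfolding h_def by (simp add: sum.atLeast0_atMost_Suc)
    also have "(\<Sum>i\<in>{0..n}. a^i * d^(Suc n-i)) = (\<Sum>i\<in>{0..n}. d * (a^i * d^(n-i)))"
      by (rule sum.cong) (auto simp: Suc_diff_le)
    finally show ?thesis unfolding h_def by (simp add: sum_distrib_left)
  qed
  have "cheb_S n (a + d) = h n \<and> cheb_S (Suc n) (a + d) = h (Suc n)"
  proof (induction n)
    case 0
    then show ?case using step[of 0] by (simp add: h_def)
  next
    case (Suc n)
    have "h (Suc (Suc n)) = (a + d) * h (Suc n) - h n"
      using step[of "Suc n"] step[of n] assms by (simp add: algebra_simps)
    then show ?case using Suc by simp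
  qed
  then show ?thesis unfolding h_def by simp
qed

lemma cheb_sum:
  fixes a d :: complex
  assumes "a * d = 1"
  shows "cheb_S n (a + d) = d^n * (\<Sum>i\<in>{0..n}. (a^2)^i)"
proof -
  have "(\<Sum>i\<in>{0..n}. a^i * d^(n-i)) = (\<Sum>i\<in>{0..n}. d^n * (a^2)^i)"
  proof (rule sum.cong)
    fix i assume "i \<in> {0..n}"
    then have "d^n = d^(n-i) * d^i" by (simp add: power_add[symmetric])
    moreover have "(a^2)^i = a^i * a^i" by (simp add: power2_eq_square power_mult_distrib)
    ultimately have "d^n * (a^2)^i = d^(n-i) * a^i * (a*d)^i"
      by (simp add: power_mult_distrib algebra_simps)
    then show "a^i * d^(n-i) = d^n * (a^2)^i" using assms by simp
  qed simp
  then show ?thesis using cheb_h[OF assms] by (simp add: sum_distrib_left)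
qed

lemma triangularize:
  fixes V :: "complex^2^2"
  assumes "det V = 1"
  shows "\<exists>P Q :: complex^2^2. P ** Q = mat 1 \<and> Q ** P = mat 1 \<and> (P ** V ** Q)$2$1 = 0"
proof (cases "V$2$1 = 0")
  case True
  then show ?thesis by (intro exI[of _ "mat 1"]) simp
next
  case False
  define e f g h where "e = V$1$1" "f = V$1$2" "g = V$2$1" "h = V$2$2"
  have det1: "e*h - f*g = 1" using assms unfolding e_f_g_h_def det_2 by simp
  define t where "t = e + h"
  define lm where "lm = (t + csqrt (t^2 - 4)) / 2"
  have lam: "lm^2 - t*lm + 1 = 0"
  proof -
    have "2*lm - t = csqrt (t^2 - 4)" unfolding lm_def by (simp add: field_simps)
    then have "(2*lm - t)^2 = t^2 - 4" by simp
    then have "4*(lm^2 - t*lm + 1) = 0" by (simp add: power2_eq_square algebra_simps)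
    then show ?thesis by (simp only: mult_eq_0_iff) simp
  qed
  have g0: "g \<noteq> 0" using False e_f_g_h_def by simp
  define P :: "complex^2^2" where "P = vector [vector [0, 1/g], vector [-g, lm - h]]"
  define Q :: "complex^2^2" where "Q = vector [vector [lm - h, -1/g], vector [g, 0]]"
  have "P ** Q = mat 1"
    unfolding vec_eq_iff forall_2 using g0
    by (simp add: P_def Q_def matrix_matrix_mult_def sum_2 mat_def field_simps)
  moreover have "Q ** P = mat 1"
    unfolding vec_eq_iff forall_2 using g0
    by (simp add: P_def Q_def matrix_matrix_mult_def sum_2 mat_def field_simps)
  moreover have "(P ** V ** Q)$2$1 = 0"
  proof -
    have "(P ** V ** Q)$2$1 = -g*(e*(lm-h) + f*g) + (lm-h)*(g*(lm-h) + h*g)"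
      by (simp add: P_def Q_def matrix_matrix_mult_def sum_2 e_f_g_h_def algebra_simps)
    also have "\<dots> = g * (lm^2 - t*lm + 1) + g * (e*h - f*g - 1)"
      unfolding t_def by (simp add: power2_eq_square algebra_simps)
    finally show ?thesis using lam det1 by simp
  qed
  ultimately show ?thesis by blast
qed

theorem proposition3p6:
  fixes V :: "complex^2^2" and l :: nat
  assumes "det V = 1"
  shows "det (sigma_mat l (Ad V)) = of_nat (l + 1) * (cheb_S l (trace V))^2"
proof -
  obtain P Q :: "complex^2^2" where PQ: "P ** Q = mat 1" and QP: "Q ** P = mat 1"
    and T21: "(P ** V ** Q)$2$1 = 0"
    using triangularize[OF assms] by blast
  define T where "T = P ** V ** Q"
  have VT: "V = Q ** T ** P"
    unfolding T_def by (metis QP matrix_mul_assoc matrix_mul_lid matrix_mul_rid)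
  have "det P * det Q = 1" using PQ det_mul[of P Q] by simp
  then have detT: "det T = 1" unfolding T_def det_mul using assms
    by (metis mult.commute mult.left_commute mult.right_neutral)
  have trT: "trace T = trace V"
    unfolding T_def by (metis QP matrix_mul_assoc matrix_mul_lid trace_mul_sym)
  define a d where "a = T$1$1" "d = T$2$2"
  have T21': "T$2$1 = 0" using T21 T_def by simp
  have ad: "a * d = 1" using detT T21' unfolding det_2 a_d_def by simp
  have tr: "trace V = a + d" using trT unfolding trace_def sum_2 a_d_def by simp
  have A1: "Ad P ** Ad Q = mat 1" "Ad Q ** Ad P = mat 1"
    using PQ QP by (simp_all add: Ad_mult[symmetric] Ad_one)
  have "det (sigma_mat l (Ad V)) = det (sigma_mat l (Ad Q ** Ad T ** Ad P))"
    unfolding VT by (simp add: Ad_mult)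
  also have "\<dots> = det (sigma_mat l (Ad T))"
    by (rule det_sigma_conj[OF A1(1) A1(2)])
  also have "\<dots> = (\<Sum>i\<in>{0..l}. (a^2)^i) * (\<Sum>i\<in>{0..l}. 1^i) * (\<Sum>i\<in>{0..l}. (d^2)^i)"
    by (subst det_sigma_triang) (simp_all add: Ad_entries T21' ad a_d_def[symmetric])
  also have "\<dots> = of_nat (l + 1) * (cheb_S l (a + d) * cheb_S l (d + a))"
  proof -
    have c1: "cheb_S l (a + d) = d^l * (\<Sum>i\<in>{0..l}. (a^2)^i)" using cheb_sum[OF ad] .
    have c2: "cheb_S l (d + a) = a^l * (\<Sum>i\<in>{0..l}. (d^2)^i)" using cheb_sum[of d a] ad
      by (simp add: mult.commute)
    have "a^l * d^l = 1" using ad by (simp add: power_mult_distrib[symmetric])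
    then show ?thesis unfolding c1 c2 by (simp add: algebra_simps) (simp add: mult.assoc[symmetric])
  qed
  finally show ?thesis unfolding tr by (simp add: add.commute power2_eq_square)
qed

end
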